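(* Consider an inter-class orthogonal main effect plan on $n$ runs whose factors are partitioned into $k$ classes, the $i$-th class consisting of factors $F_{i,1},\dots,F_{i,m_i}$, with every level of every factor occurring. Fix a class $i$ and $j\in\{1,\dots,m_i\}$. Then: (a) $X_{i,j}'(I-P_{\mathrm{all}\setminus(i,j)})X_{i,j}=X_{i,j}'(I-P^i_{\bar j})X_{i,j}$ and $X_{i,j}'(I-P_{\mathrm{all}\setminus(i,j)})Y=X_{i,j}'(I-P^i_{\bar j})Y$; that is, the reduced normal equation for $\alpha^{ij}$ (after eliminating all other factors and the general mean) coincides with $C^i_{j;\bar j}\widehat{\alpha^{ij}}=Q^i_{j;\bar j}$, where $C^i_{j;\bar j}=X_{i,j}'(I-P^i_{\bar j})X_{i,j}$ and $Q^i_{j;\bar j}=X_{i,j}'(I-P^i_{\bar j})Y$, obtained by eliminating only the other factors of class $i$ and the general mean. (b) $SS_{(i,j);\mathrm{all}}=SS^i_{j;\mathrm{all}}$ and $SS_{(i,j);\mathrm{all}>}=SS^i_{j;\mathrm{all}>}$. (c) $SS_E=SS_{tot}-\sum_{i=1}^kSS^i_{total}$, where $SS^i_{total}=\sum_{j=1}^{m_i}SS^i_{j;\mathrm{all}>}$.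
   Context: Model: $Y=\mathbf 1_n\mu+\sum_{i,j}X_{i,j}\alpha^{ij}+\epsilon$ with uncorrelated homoscedastic errors, where $X_{i,j}$ is the 0-1 design matrix of $F_{i,j}$ ($(u,t)$ entry $1$ iff $F_{i,j}$ is at level $t$ in run $u$). Two factors $A,B$ are orthogonal if $n_{AB}(s,t)=r_A(s)r_B(t)/n$ for all levels $s,t$ (incidence counts and replications); the plan is inter-class orthogonal if any two factors in different classes are orthogonal. $P_M$ denotes the orthogonal projector onto the column space of the matrix $M$. For a set $\mathcal S$ of factors, $P_{\mathcal S}$ is the projector onto the column space of $[\mathbf 1_n, X_F : F\in\mathcal S]$ (the general mean is always included). For a factor $F$ with design matrix $X_F$ not in $\mathcal S$, the sum of squares of $F$ adjusted for $\mathcal S$ is $SS_{F;\mathcal S}=Y'(I-P_{\mathcal S})X_F[X_F'(I-P_{\mathcal S})X_F]^-X_F'(I-P_{\mathcal S})Y$. Notation: $P_{\mathrm{all}\setminus(i,j)}$ uses all factors other than $F_{i,j}$; $P^i_{\bar j}$ uses the factors $F_{i,l}$, $l\neq j$ (of class $i$ only). Order all factors lexicographically: $F_{1,1},\dots,F_{1,m_1},F_{2,1},\dots,F_{k,m_k}$. $SS_{(i,j);\mathrm{all}}$ = SS of $F_{i,j}$ adjusted for all other factors; $SS_{(i,j);\mathrm{all}>}$ = SS of $F_{i,j}$ adjusted for all factors after it in this global order; $SS^i_{j;\mathrm{all}}$ = SS of $F_{i,j}$ adjusted for $F_{i,l}$, $l\neq j$; $SS^i_{j;\mathrm{all}>}$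 = SS of $F_{i,j}$ adjusted for $F_{i,j+1},\dots,F_{i,m_i}$ (for $j=m_i$, adjusted for the general mean only). $SS_{tot}=\sum_uY_u^2-(\sum_uY_u)^2/n$; $SS_E$ is the residual sum of squares of the full model. *)

theory Defs
  imports "HOL-Analysis.Analysis"
begin

text \<open>Runs are indexed by a finite type 'r (so n = CARD('r)); vectors in R^n are real^'r.
  Factor F_{i,j} (class i in 1..k, index j in 1..m i) has s i j levels 0..<s i j;
  lev i j u is the level of F_{i,j} in run u.\<close>

definition ones :: "real^'r::finite" where
  "ones = (\<chi> u. 1)"

text \<open>Column t of the 0-1 design matrix X_{i,j}.\<close>
definition xcol :: "(nat \<Rightarrow> nat \<Rightarrow> 'r::finite \<Rightarrow> nat) \<Rightarrow> nat \<Rightarrow> nat \<Rightarrow> nat \<Rightarrow> real^'r" where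
  "xcol lev i j t = (\<chi> u. if lev i j u = t then 1 else 0)"

definition facs :: "nat \<Rightarrow> (nat \<Rightarrow> nat) \<Rightarrow> (nat \<times> nat) set" where
  "facs k m = {(i, j). 1 \<le> i \<and> i \<le> k \<and> 1 \<le> j \<and> j \<le> m i}"

definition valid_plan :: "nat \<Rightarrow> (nat \<Rightarrow> nat) \<Rightarrow> (nat \<Rightarrow> nat \<Rightarrow> nat) \<Rightarrow> (nat \<Rightarrow> nat \<Rightarrow> 'r::finite \<Rightarrow> nat) \<Rightarrow> bool" where
  "valid_plan k m s lev \<longleftrightarrow>
     (\<forall>(i, j) \<in> facs k m. (\<forall>u. lev i j u < s i j) \<and> (\<forall>t < s i j. \<exists>u. lev i j u = t))"

definition orth_factors :: "(nat \<Rightarrow> nat \<Rightarrow> 'r::finite \<Rightarrow> nat) \<Rightarrow> nat \<times> nat \<Rightarrow> nat \<times> nat \<Rightarrow> bool" where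
  "orth_factors lev A B \<longleftrightarrow>
     (\<forall>a b. real (card {u. lev (fst A) (snd A) u = a \<and> lev (fst B) (snd B) u = b}) =
            real (card {u. lev (fst A) (snd A) u = a}) * real (card {u. lev (fst B) (snd B) u = b})
            / real CARD('r))"

definition inter_class_orthogonal :: "nat \<Rightarrow> (nat \<Rightarrow> nat) \<Rightarrow> (nat \<Rightarrow> nat \<Rightarrow> 'r::finite \<Rightarrow> nat) \<Rightarrow> bool" where
  "inter_class_orthogonal k m lev \<longleftrightarrow>
     (\<forall>A \<in> facs k m. \<forall>B \<in> facs k m. fst A \<noteq> fst B \<longrightarrow> orth_factors lev A B)"

definition colsp :: "(nat \<Rightarrow> nat \<Rightarrow> nat) \<Rightarrow> (nat \<Rightarrow> nat \<Rightarrow> 'r::finite \<Rightarrow> nat) \<Rightarrow> (nat \<times> nat) set \<Rightarrow> (real^'r) set" where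
  "colsp s lev S = span (insert ones (\<Union>(i, j) \<in> S. {xcol lev i j t | t. t < s i j}))"

definition proj :: "(real^'r::finite) set \<Rightarrow> real^'r \<Rightarrow> real^'r" where
  "proj V y = (THE p. p \<in> V \<and> (\<forall>v \<in> V. inner (y - p) v = 0))"

definition Pfac :: "(nat \<Rightarrow> nat \<Rightarrow> nat) \<Rightarrow> (nat \<Rightarrow> nat \<Rightarrow> 'r::finite \<Rightarrow> nat) \<Rightarrow> (nat \<times> nat) set \<Rightarrow> real^'r \<Rightarrow> real^'r" where
  "Pfac s lev S y = proj (colsp s lev S) y"

definition resid :: "(nat \<Rightarrow> nat \<Rightarrow> nat) \<Rightarrow> (nat \<Rightarrow> nat \<Rightarrow> 'r::finite \<Rightarrow> nat) \<Rightarrow> (nat \<times> nat) set \<Rightarrow> real^'r \<Rightarrow> real^'r" where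
  "resid s lev S y = y - Pfac s lev S y"

definition Cmat :: "(nat \<Rightarrow> nat \<Rightarrow> nat) \<Rightarrow> (nat \<Rightarrow> nat \<Rightarrow> 'r::finite \<Rightarrow> nat) \<Rightarrow> (nat \<times> nat) set \<Rightarrow> nat \<times> nat \<Rightarrow> nat \<Rightarrow> nat \<Rightarrow> real" where
  "Cmat s lev S F a b = inner (xcol lev (fst F) (snd F) a) (resid s lev S (xcol lev (fst F) (snd F) b))"

definition Qvec :: "(nat \<Rightarrow> nat \<Rightarrow> nat) \<Rightarrow> (nat \<Rightarrow> nat \<Rightarrow> 'r::finite \<Rightarrow> nat) \<Rightarrow> (nat \<times> nat) set \<Rightarrow> nat \<times> nat \<Rightarrow> real^'r \<Rightarrow> nat \<Rightarrow> real" where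
  "Qvec s lev S F Y a = inner (xcol lev (fst F) (snd F) a) (resid s lev S Y)"

definition is_ginv :: "nat \<Rightarrow> (nat \<Rightarrow> nat \<Rightarrow> real) \<Rightarrow> (nat \<Rightarrow> nat \<Rightarrow> real) \<Rightarrow> bool" where
  "is_ginv d C G \<longleftrightarrow>
     (\<forall>a < d. \<forall>b < d. (\<Sum>c<d. \<Sum>e<d. C a c * G c e * C e b) = C a b)"

definition SSadj :: "(nat \<Rightarrow> nat \<Rightarrow> nat) \<Rightarrow> (nat \<Rightarrow> nat \<Rightarrow> 'r::finite \<Rightarrow> nat) \<Rightarrow> (nat \<times> nat) set \<Rightarrow> nat \<times> nat \<Rightarrow> real^'r \<Rightarrow> real" where
  "SSadj s lev S F Y =
     (let d = s (fst F) (snd F);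
          C = Cmat s lev S F;
          q = Qvec s lev S F Y;
          G = (SOME G. is_ginv d C G)
      in (\<Sum>a<d. \<Sum>b<d. q a * G a b * q b))"

definition all_but :: "nat \<Rightarrow> (nat \<Rightarrow> nat) \<Rightarrow> nat \<Rightarrow> nat \<Rightarrow> (nat \<times> nat) set" where
  "all_but k m i j = facs k m - {(i, j)}"

definition all_after :: "nat \<Rightarrow> (nat \<Rightarrow> nat) \<Rightarrow> nat \<Rightarrow> nat \<Rightarrow> (nat \<times> nat) set" where
  "all_after k m i j = {(i', j') \<in> facs k m. i < i' \<or> (i' = i \<and> j < j')}"

definition class_but :: "(nat \<Rightarrow> nat) \<Rightarrow> nat \<Rightarrow> nat \<Rightarrow> (nat \<times> nat) set" where
  "class_but m i j = {(i, l) | l. 1 \<le> l \<and> l \<le> m i \<and> l \<noteq> j}"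

definition class_after :: "(nat \<Rightarrow> nat) \<Rightarrow> nat \<Rightarrow> nat \<Rightarrow> (nat \<times> nat) set" where
  "class_after m i j = {(i, l) | l. j < l \<and> l \<le> m i}"

definition SS_tot :: "real^'r::finite \<Rightarrow> real" where
  "SS_tot Y = (\<Sum>u\<in>UNIV. (Y $ u)\<^sup>2) - (\<Sum>u\<in>UNIV. Y $ u)\<^sup>2 / real CARD('r)"

definition SS_E :: "nat \<Rightarrow> (nat \<Rightarrow> nat) \<Rightarrow> (nat \<Rightarrow> nat \<Rightarrow> nat) \<Rightarrow> (nat \<Rightarrow> nat \<Rightarrow> 'r::finite \<Rightarrow> nat) \<Rightarrow> real^'r \<Rightarrow> real" where
  "SS_E k m s lev Y = (norm (resid s lev (facs k m) Y))\<^sup>2"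

end

theory Submission
  imports Defs
begin


lemma proj_ex:
  fixes V :: "(real^'r::finite) set"
  assumes "subspace V"
  shows "\<exists>p. p \<in> V \<and> (\<forall>v\<in>V. inner (y - p) v = 0)"
proof -
  obtain a b where "a \<in> span V" "\<And>w. w \<in> span V \<Longrightarrow> orthogonal b w" "y = a + b"
    using orthogonal_subspace_decomp_exists by blast
  moreover have "span V = V" using assms by (simp add: span_eq_iff)
  ultimately show ?thesis
    by (intro exI[of _ a]) (auto simp: orthogonal_def)
qed

lemma proj_uniq:
  fixes V :: "(real^'r::finite) set"
  assumes "subspace V" "p \<in> V" "\<forall>v\<in>V. inner (y - p) v = 0"
    "p' \<in> V" "\<forall>v\<in>V. inner (y - p') v = 0"
  shows "p = p'"
proof -
  have d: "p - p' \<in> V" using assms subspace_diff by blast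
  have "inner (p - p') (p - p') = inner (y - p') (p - p') - inner (y - p) (p - p')"
    by (simp add: inner_diff_left)
  also have "\<dots> = 0" using assms d by simp
  finally show ?thesis by simp
qed

lemma proj_char:
  fixes V :: "(real^'r::finite) set"
  assumes "subspace V" "p \<in> V" "\<forall>v\<in>V. inner (y - p) v = 0"
  shows "proj V y = p"
  unfolding proj_def
  apply (rule the_equality)
  using assms proj_uniq[OF assms(1)] by blast+

lemma proj_props:
  fixes V :: "(real^'r::finite) set"
  assumes "subspace V"
  shows "proj V y \<in> V" "\<And>v. v \<in> V \<Longrightarrow> inner (y - proj V y) v = 0"
proof -
  obtain p where p: "p \<in> V" "\<forall>v\<in>V. inner (y - p) v = 0" using proj_ex[OF assms] by blast
  have "proj V y = p" by (rule proj_char[OF assms p])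
  then show "proj V y \<in> V" "\<And>v. v \<in> V \<Longrightarrow> inner (y - proj V y) v = 0" using p by auto
qed

lemma proj_add:
  fixes V :: "(real^'r::finite) set"
  assumes "subspace V"
  shows "proj V (x + y) = proj V x + proj V y"
proof (rule proj_char[OF assms])
  show "proj V x + proj V y \<in> V"
    by (rule subspace_add[OF assms proj_props(1)[OF assms] proj_props(1)[OF assms]])
  show "\<forall>v\<in>V. inner (x + y - (proj V x + proj V y)) v = 0"
  proof
    fix v assume v: "v \<in> V"
    have "inner (x + y - (proj V x + proj V y)) v = inner (x - proj V x) v + inner (y - proj V y) v"
      by (simp add: inner_diff_left inner_add_left)
    then show "inner (x + y - (proj V x + proj V y)) v = 0"
      using proj_props(2)[OF assms v] by simp
  qed
qed

lemma proj_scale: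
  fixes V :: "(real^'r::finite) set"
  assumes "subspace V"
  shows "proj V (c *\<^sub>R x) = c *\<^sub>R proj V x"
proof (rule proj_char[OF assms])
  show "c *\<^sub>R proj V x \<in> V"
    by (rule subspace_scale[OF assms proj_props(1)[OF assms]])
  show "\<forall>v\<in>V. inner (c *\<^sub>R x - c *\<^sub>R proj V x) v = 0"
  proof
    fix v assume v: "v \<in> V"
    have "inner (c *\<^sub>R x - c *\<^sub>R proj V x) v = c * inner (x - proj V x) v"
      by (simp add: inner_diff_left right_diff_distrib)
    then show "inner (c *\<^sub>R x - c *\<^sub>R proj V x) v = 0" using proj_props(2)[OF assms v] by simp
  qed
qed

lemma proj_in_self:
  fixes V :: "(real^'r::finite) set"
  assumes "subspace V" "x \<in> V"
  shows "proj V x = x"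
  by (rule proj_char[OF assms]) simp

lemma proj_orth_zero:
  fixes V :: "(real^'r::finite) set"
  assumes "subspace V" "\<forall>v\<in>V. inner x v = 0"
  shows "proj V x = 0"
  by (rule proj_char[OF assms(1) subspace_0[OF assms(1)]]) (simp add: assms(2))

lemma proj_UNIV: "proj (UNIV :: (real^'r::finite) set) x = x"
  by (rule proj_in_self[OF subspace_UNIV]) simp

lemma proj_osum:
  fixes U W V :: "(real^'r::finite) set"
  assumes U: "subspace U" and W: "subspace W"
    and V: "V = {u + w | u w. u \<in> U \<and> w \<in> W}"
    and orth: "\<And>u w. u \<in> U \<Longrightarrow> w \<in> W \<Longrightarrow> inner u w = 0"
  shows "subspace V \<Longrightarrow> proj V y = proj U y + proj W y"
proof -
  assume sV: "subspace V"
  show ?thesis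
  proof (rule proj_char[OF sV])
    show "proj U y + proj W y \<in> V" using V proj_props[OF U] proj_props[OF W] by blast
    show "\<forall>v\<in>V. inner (y - (proj U y + proj W y)) v = 0"
    proof
      fix v assume "v \<in> V"
      then obtain u w where uw: "v = u + w" "u \<in> U" "w \<in> W" using V by blast
      have a: "inner (proj W y) u = 0" using orth[OF uw(2) proj_props(1)[OF W]] by (simp add: inner_commute)
      have b: "inner (proj U y) w = 0" using orth[OF proj_props(1)[OF U] uw(3)] by simp
      have "inner (y - (proj U y + proj W y)) v =
         inner (y - proj U y) u - inner (proj W y) u + (inner (y - proj W y) w - inner (proj U y) w)"
        by (simp add: uw inner_diff_left inner_add_left inner_add_right algebra_simps)
      then show "inner (y - (proj U y + proj W y)) v = 0"
        using a b proj_props(2)[OF U uw(2)] proj_props(2)[OF W uw(3)] by simp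
    qed
  qed
qed

lemma proj_chain:
  fixes L U V :: "(real^'r::finite) set"
  assumes L: "subspace L" and U: "subspace U" and V: "subspace V"
    and LU: "L \<subseteq> U" and UV: "U \<subseteq> V"
  shows "(norm (proj V y - proj L y))\<^sup>2 = (norm (proj V y - proj U y))\<^sup>2 + (norm (proj U y - proj L y))\<^sup>2"
proof -
  have inU: "proj U y - proj L y \<in> U"
    using proj_props(1)[OF U] proj_props(1)[OF L] LU subspace_diff[OF U] by blast
  have "inner (proj V y - proj U y) (proj U y - proj L y)
      = inner (y - proj U y) (proj U y - proj L y) - inner (y - proj V y) (proj U y - proj L y)"
    by (simp add: inner_diff_left)
  also have "\<dots> = 0" using proj_props(2)[OF U inU] proj_props(2)[OF V] inU UV by auto
  finally have o: "inner (proj V y - proj U y) (proj U y - proj L y) = 0" .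
  have "(norm ((proj V y - proj U y) + (proj U y - proj L y)))\<^sup>2 =
     (norm (proj V y - proj U y))\<^sup>2 + (norm (proj U y - proj L y))\<^sup>2"
    by (rule norm_add_Pythagorean) (simp add: orthogonal_def o)
  then show ?thesis by simp
qed



lemma dual_exists:
  fixes B :: "(real^'r::finite) set"
  assumes ind: "independent B"
  shows "\<exists>w. (\<forall>b\<in>B. w b \<in> span B) \<and> (\<forall>b\<in>B. \<forall>b'\<in>B. inner (w b) b' = (if b = b' then 1 else 0))"
proof -
  define r where "r b = b - proj (span (B - {b})) b" for b
  define w where "w b = (1 / inner (r b) (r b)) *\<^sub>R r b" for b
  have props: "w b \<in> span B \<and> (\<forall>b'\<in>B. inner (w b) b' = (if b = b' then 1 else 0))" if b: "b \<in> B" for b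
  proof -
    let ?S = "span (B - {b})"
    have sS: "subspace ?S" by (rule subspace_span)
    have pS: "proj ?S b \<in> ?S" by (rule proj_props(1)[OF sS])
    have SB: "?S \<subseteq> span B" by (rule span_mono) blast
    have rB: "r b \<in> span B" unfolding r_def
      using span_base[OF b] pS SB span_diff by blast
    have rnz: "r b \<noteq> 0"
    proof
      assume "r b = 0"
      then have "b \<in> ?S" using pS by (simp add: r_def)
      then show False using ind b unfolding dependent_def by blast
    qed
    have orth: "inner (r b) v = 0" if "v \<in> ?S" for v
      using proj_props(2)[OF sS that] by (simp add: r_def)
    have "inner (r b) b = inner (r b) (r b) + inner (r b) (proj ?S b)"
      by (simp add: r_def inner_diff_right)
    then have rbb: "inner (r b) b = inner (r b) (r b)" using orth[OF pS] by simp
    have pos: "inner (r b) (r b) \<noteq> 0" using rnz by simp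
    have "inner (w b) b' = (if b = b' then 1 else 0)" if b': "b' \<in> B" for b'
    proof (cases "b = b'")
      case True then show ?thesis using rbb pos by (simp add: w_def)
    next
      case False
      then have "b' \<in> ?S" using b' by (intro span_base) blast
      then show ?thesis using orth False by (simp add: w_def)
    qed
    moreover have "w b \<in> span B" unfolding w_def using rB by (rule span_mul)
    ultimately show ?thesis by blast
  qed
  show ?thesis by (rule exI[of _ w]) (use props in blast)
qed

lemma dual_expand:
  fixes B :: "(real^'r::finite) set"
  assumes fin: "finite B" and w1: "\<forall>b\<in>B. w b \<in> span B"
    and w2: "\<forall>b\<in>B. \<forall>b'\<in>B. inner (w b) b' = (if b = b' then 1 else 0)"
    and v: "v \<in> span B"
  shows "(\<Sum>b\<in>B. inner v b *\<^sub>R w b) = v"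
proof -
  let ?u = "\<Sum>b\<in>B. inner v b *\<^sub>R w b"
  have uB: "?u \<in> span B" by (intro span_sum span_mul) (use w1 in blast)
  have d: "?u - v \<in> span B" using uB v span_diff by blast
  have o: "orthogonal (?u - v) b'" if b': "b' \<in> B" for b'
  proof -
    have "inner ?u b' = (\<Sum>b\<in>B. inner v b * inner (w b) b')"
      by (simp add: inner_sum_left)
    also have "\<dots> = (\<Sum>b\<in>B. inner v b * (if b = b' then 1 else 0))"
      using w2 b' by (intro sum.cong) auto
    also have "\<dots> = inner v b'" using fin b' by (simp add: if_distrib cong: if_cong)
    finally show ?thesis by (simp add: orthogonal_def inner_diff_left)
  qed
  have "orthogonal (?u - v) (?u - v)" by (rule orthogonal_to_span[OF d o])
  then have "?u - v = 0" by (simp only: orthogonal_self)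
  then show ?thesis by simp
qed

lemma ginv_exists:
  fixes z :: "nat \<Rightarrow> real^'r::finite"
  shows "\<exists>G. \<forall>a<d. \<forall>e<d. (\<Sum>c<d. \<Sum>f<d. inner (z a) (z c) * G c f * inner (z f) (z e)) = inner (z a) (z e)"
proof -
  obtain B where BZ: "B \<subseteq> z ` {..<d}" and ind: "independent B" and ZB: "z ` {..<d} \<subseteq> span B"
    using maximal_independent_subset by blast
  have fin: "finite B" using BZ finite_subset by blast
  obtain w where w1: "\<forall>b\<in>B. w b \<in> span B"
    and w2: "\<forall>b\<in>B. \<forall>b'\<in>B. inner (w b) b' = (if b = b' then 1 else 0)"
    using dual_exists[OF ind] by blast
  define J where "J = {a \<in> {..<d}. z a \<in> B \<and> (\<forall>c<a. z c \<noteq> z a)}"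
  have injJ: "inj_on z J"
  proof (rule inj_onI)
    fix a a' assume aJ: "a \<in> J" "a' \<in> J" and eq: "z a = z a'"
    have A1: "\<forall>c<a'. z c \<noteq> z a'" using aJ(2) by (simp add: J_def)
    have A2: "\<forall>c<a. z c \<noteq> z a" using aJ(1) by (simp add: J_def)
    show "a = a'"
    proof (rule ccontr)
      assume "a \<noteq> a'"
      then consider "a < a'" | "a' < a" by linarith
      then show False using A1 A2 eq by cases auto
    qed
  qed
  have imJ: "z ` J = B"
  proof
    show "z ` J \<subseteq> B" unfolding J_def by auto
    show "B \<subseteq> z ` J"
    proof
      fix b assume b: "b \<in> B"
      then obtain a0 where a0: "a0 < d" "z a0 = b" using BZ by blast
      define a where "a = (LEAST a. z a = b)"
      have za: "z a = b" unfolding a_def using LeastI[of "\<lambda>a. z a = b" a0] a0(2) by simp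
      have "a \<le> a0" unfolding a_def using Least_le[of "\<lambda>a. z a = b" a0] a0(2) by simp
      moreover have "\<forall>c<a. z c \<noteq> z a"
      proof (intro allI impI)
        fix c assume "c < a"
        then have "\<not> z c = b" unfolding a_def by (rule not_less_Least)
        then show "z c \<noteq> z a" using za by simp
      qed
      ultimately have "a \<in> J" using a0 za b unfolding J_def by auto
      then show "b \<in> z ` J" using za by blast
    qed
  qed
  define G where "G c f = (if c \<in> J \<and> f \<in> J then inner (w (z c)) (w (z f)) else 0)" for c f
  have JD: "J \<subseteq> {..<d}" unfolding J_def by auto
  have finJ: "finite J" using JD finite_subset by blast
  have key: "(\<Sum>c\<in>J. inner (z a) (z c) *\<^sub>R w (z c)) = z a" if "a < d" for a
  proof -
    have "(\<Sum>c\<in>J. inner (z a) (z c) *\<^sub>R w (z c)) = (\<Sum>b\<in>B. inner (z a) b *\<^sub>R w b)"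
    proof -
      have "(\<Sum>b\<in>z ` J. inner (z a) b *\<^sub>R w b) = (\<Sum>c\<in>J. inner (z a) (z c) *\<^sub>R w (z c))"
        using sum.reindex[OF injJ, of "\<lambda>b. inner (z a) b *\<^sub>R w b"] by (simp add: comp_def)
      then show ?thesis using imJ by simp
    qed
    also have "\<dots> = z a" by (rule dual_expand[OF fin w1 w2]) (use ZB that in blast)
    finally show ?thesis .
  qed
  have "\<forall>a<d. \<forall>e<d. (\<Sum>c<d. \<Sum>f<d. inner (z a) (z c) * G c f * inner (z f) (z e)) = inner (z a) (z e)"
  proof (intro allI impI)
    fix a e assume a: "a < d" and e: "e < d"
    have "(\<Sum>c<d. \<Sum>f<d. inner (z a) (z c) * G c f * inner (z f) (z e))
        = (\<Sum>c\<in>J. \<Sum>f\<in>J. inner (z a) (z c) * inner (w (z c)) (w (z f)) * inner (z f) (z e))"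
    proof -
      have "(\<Sum>c<d. \<Sum>f<d. inner (z a) (z c) * G c f * inner (z f) (z e))
          = (\<Sum>c<d. if c \<in> J then (\<Sum>f<d. if f \<in> J then inner (z a) (z c) * inner (w (z c)) (w (z f)) * inner (z f) (z e) else 0) else 0)"
        unfolding G_def by (auto intro!: sum.cong)
      also have "\<dots> = (\<Sum>c\<in>J. \<Sum>f\<in>J. inner (z a) (z c) * inner (w (z c)) (w (z f)) * inner (z f) (z e))"
        using JD by (simp add: sum.If_cases Int_absorb1 Int_absorb2)
      finally show ?thesis .
    qed
    also have "\<dots> = inner (\<Sum>c\<in>J. inner (z a) (z c) *\<^sub>R w (z c)) (\<Sum>f\<in>J. inner (z e) (z f) *\<^sub>R w (z f))"
      apply (simp add: inner_sum_left inner_sum_right sum_distrib_left sum_distrib_right inner_commute mult_ac)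
      apply (subst sum.swap)
      apply (simp add: inner_commute mult_ac)
      done
    also have "\<dots> = inner (z a) (z e)" using key[OF a] key[OF e] by simp
    finally show "(\<Sum>c<d. \<Sum>f<d. inner (z a) (z c) * G c f * inner (z f) (z e)) = inner (z a) (z e)" .
  qed
  then show ?thesis by blast
qed



lemma span_repr:
  fixes z :: "nat \<Rightarrow> real^'r::finite"
  assumes "v \<in> span (z ` {..<d})"
  shows "\<exists>\<beta>. v = (\<Sum>c<d. \<beta> c *\<^sub>R z c)"
  using assms
proof (induction rule: span_induct)
  case base
  show ?case unfolding subspace_def
  proof (intro conjI allI impI ballI)
    show "0 \<in> {v. \<exists>\<beta>. v = (\<Sum>c<d. \<beta> c *\<^sub>R z c)}" by (rule CollectI, rule exI[of _ "\<lambda>_. 0"]) simp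
  next
    fix x y assume "x \<in> {v. \<exists>\<beta>. v = (\<Sum>c<d. \<beta> c *\<^sub>R z c)}" "y \<in> {v. \<exists>\<beta>. v = (\<Sum>c<d. \<beta> c *\<^sub>R z c)}"
    then obtain b1 b2 where "x = (\<Sum>c<d. b1 c *\<^sub>R z c)" "y = (\<Sum>c<d. b2 c *\<^sub>R z c)" by blast
    then have "x + y = (\<Sum>c<d. (b1 c + b2 c) *\<^sub>R z c)" by (simp add: sum.distrib scaleR_add_left)
    then show "x + y \<in> {v. \<exists>\<beta>. v = (\<Sum>c<d. \<beta> c *\<^sub>R z c)}"
      by (intro CollectI exI[of _ "\<lambda>c. b1 c + b2 c"])
  next
    fix c :: real and x assume "x \<in> {v. \<exists>\<beta>. v = (\<Sum>c<d. \<beta> c *\<^sub>R z c)}"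
    then obtain b1 where "x = (\<Sum>c<d. b1 c *\<^sub>R z c)" by blast
    then have "c *\<^sub>R x = (\<Sum>e<d. (c * b1 e) *\<^sub>R z e)" by (simp add: scaleR_sum_right)
    then show "c *\<^sub>R x \<in> {v. \<exists>\<beta>. v = (\<Sum>c<d. \<beta> c *\<^sub>R z c)}"
      by (intro CollectI exI[of _ "\<lambda>e. c * b1 e"])
  qed
next
  case (step x)
  then obtain a where a: "a < d" "x = z a" by blast
  have "(\<Sum>c<d. (if c = a then 1 else 0) *\<^sub>R z c) = (\<Sum>c<d. if c = a then z c else 0)"
    by (rule sum.cong) auto
  also have "\<dots> = z a" using a(1) by simp
  finally have "(\<Sum>c<d. (if c = a then 1 else 0) *\<^sub>R z c) = z a" .
  then show ?case using a by (intro exI[of _ "\<lambda>c. if c = a then 1 else 0"]) simp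
qed

lemma quad_ginv:
  fixes K G :: "nat \<Rightarrow> nat \<Rightarrow> real" and \<beta> :: "nat \<Rightarrow> real"
  assumes sym: "\<And>a b. K a b = K b a"
    and gi: "\<forall>a<d. \<forall>b<d. (\<Sum>c<d. \<Sum>e<d. K a c * G c e * K e b) = K a b"
  shows "(\<Sum>a<d. \<Sum>b<d. (\<Sum>c<d. K a c * \<beta> c) * G a b * (\<Sum>e<d. K b e * \<beta> e))
       = (\<Sum>c<d. \<Sum>e<d. \<beta> c * K c e * \<beta> e)"
proof -
  have "(\<Sum>a<d. \<Sum>b<d. (\<Sum>c<d. K a c * \<beta> c) * G a b * (\<Sum>e<d. K b e * \<beta> e))
     = (\<Sum>a<d. \<Sum>b<d. \<Sum>c<d. \<Sum>e<d. \<beta> c * (K c a * G a b * K b e) * \<beta> e)"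
  proof (intro sum.cong refl)
    fix a b
    have "(\<Sum>c<d. K a c * \<beta> c) * G a b * (\<Sum>e<d. K b e * \<beta> e)
        = (\<Sum>c<d. \<Sum>e<d. (K a c * \<beta> c * G a b) * (K b e * \<beta> e))"
      using sum_product[of "\<lambda>c. K a c * \<beta> c * G a b" "{..<d}" "\<lambda>e. K b e * \<beta> e" "{..<d}"]
        sum_distrib_right[of "\<lambda>c. K a c * \<beta> c" "{..<d}" "G a b"] by simp
    also have "\<dots> = (\<Sum>c<d. \<Sum>e<d. \<beta> c * (K c a * G a b * K b e) * \<beta> e)"
      by (intro sum.cong refl) (simp add: sym[of a] mult_ac)
    finally show "(\<Sum>c<d. K a c * \<beta> c) * G a b * (\<Sum>e<d. K b e * \<beta> e)
        = (\<Sum>c<d. \<Sum>e<d. \<beta> c * (K c a * G a b * K b e) * \<beta> e)" .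
  qed
  also have "\<dots> = (\<Sum>c<d. \<Sum>e<d. \<beta> c * (\<Sum>a<d. \<Sum>b<d. K c a * G a b * K b e) * \<beta> e)"
  proof -
    have "(\<Sum>a<d. \<Sum>b<d. \<Sum>c<d. \<Sum>e<d. \<beta> c * (K c a * G a b * K b e) * \<beta> e)
        = (\<Sum>a<d. \<Sum>c<d. \<Sum>b<d. \<Sum>e<d. \<beta> c * (K c a * G a b * K b e) * \<beta> e)"
      by (rule sum.cong[OF refl]) (rule sum.swap)
    also have "\<dots> = (\<Sum>c<d. \<Sum>a<d. \<Sum>b<d. \<Sum>e<d. \<beta> c * (K c a * G a b * K b e) * \<beta> e)"
      by (rule sum.swap)
    also have "\<dots> = (\<Sum>c<d. \<Sum>a<d. \<Sum>e<d. \<Sum>b<d. \<beta> c * (K c a * G a b * K b e) * \<beta> e)"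
      by (rule sum.cong[OF refl], rule sum.cong[OF refl], rule sum.swap)
    also have "\<dots> = (\<Sum>c<d. \<Sum>e<d. \<Sum>a<d. \<Sum>b<d. \<beta> c * (K c a * G a b * K b e) * \<beta> e)"
      by (rule sum.cong[OF refl], rule sum.swap)
    also have "\<dots> = (\<Sum>c<d. \<Sum>e<d. \<beta> c * (\<Sum>a<d. \<Sum>b<d. K c a * G a b * K b e) * \<beta> e)"
      by (simp add: sum_distrib_left sum_distrib_right)
    finally show ?thesis .
  qed
  also have "\<dots> = (\<Sum>c<d. \<Sum>e<d. \<beta> c * K c e * \<beta> e)"
    using gi by (intro sum.cong refl) simp
  finally show ?thesis .
qed

lemma SSadj_eq:
  fixes lev :: "nat \<Rightarrow> nat \<Rightarrow> 'r::finite \<Rightarrow> nat"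
  shows "SSadj s lev S F Y =
    (norm (proj (span (colsp s lev S \<union> xcol lev (fst F) (snd F) ` {..<s (fst F) (snd F)})) Y - Pfac s lev S Y))\<^sup>2"
proof -
  define U where "U = colsp s lev S"
  define x where "x = xcol lev (fst F) (snd F)"
  define d where "d = s (fst F) (snd F)"
  define z where "z a = x a - proj U (x a)" for a
  define X where "X = x ` {..<d}"
  define Vb where "Vb = span (U \<union> X)"
  define W where "W = span (z ` {..<d})"
  have sU: "subspace U" unfolding U_def colsp_def by (rule subspace_span)
  have sV: "subspace Vb" unfolding Vb_def by (rule subspace_span)
  have sW: "subspace W" unfolding W_def by (rule subspace_span)
  have zU: "inner (z a) u = 0" if "u \<in> U" for a u
    using proj_props(2)[OF sU that] by (simp add: z_def)
  have K: "Cmat s lev S F a b = inner (z a) (z b)" for a b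
  proof -
    have "Cmat s lev S F a b = inner (x a) (z b)"
      by (simp add: Cmat_def resid_def Pfac_def U_def x_def z_def)
    also have "\<dots> = inner (z a) (z b) + inner (proj U (x a)) (z b)"
      by (simp add: z_def inner_diff_left)
    also have "inner (proj U (x a)) (z b) = 0"
      using zU[OF proj_props(1)[OF sU]] by (simp add: inner_commute)
    finally show ?thesis by simp
  qed
  have Q: "Qvec s lev S F Y a = inner (x a) (Y - proj U Y)" for a
    by (simp add: Qvec_def resid_def Pfac_def U_def x_def)
  obtain G0 where G0: "\<forall>a<d. \<forall>e<d. (\<Sum>c<d. \<Sum>f<d. inner (z a) (z c) * G0 c f * inner (z f) (z e)) = inner (z a) (z e)"
    using ginv_exists by blast
  define G where "G = (SOME G. is_ginv d (Cmat s lev S F) G)"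
  have "is_ginv d (Cmat s lev S F) G0" unfolding is_ginv_def K using G0 by blast
  then have giG: "is_ginv d (Cmat s lev S F) G" unfolding G_def by (rule someI[where P = "is_ginv d (Cmat s lev S F)"])
  then have gi: "\<forall>a<d. \<forall>b<d. (\<Sum>c<d. \<Sum>e<d. inner (z a) (z c) * G c e * inner (z e) (z b)) = inner (z a) (z b)"
    unfolding is_ginv_def K .
  have UV: "U \<subseteq> Vb" unfolding Vb_def using span_superset by blast
  have XV: "X \<subseteq> Vb" unfolding Vb_def using span_superset by blast
  have zV: "z a \<in> Vb" if "a < d" for a
  proof -
    have "x a \<in> Vb" using XV that X_def by blast
    moreover have "proj U (x a) \<in> Vb" using UV proj_props(1)[OF sU] by blast
    ultimately show ?thesis unfolding z_def using subspace_diff[OF sV] by blast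
  qed
  have WV: "W \<subseteq> Vb" unfolding W_def by (rule span_minimal) (use zV sV in auto)
  have WU: "inner w u = 0" if "w \<in> W" "u \<in> U" for w u
  proof -
    have "orthogonal u w"
      by (rule orthogonal_to_span[of w "z ` {..<d}"]) (use that W_def zU in \<open>auto simp: orthogonal_def inner_commute\<close>)
    then show ?thesis by (simp add: orthogonal_def inner_commute)
  qed
  define p where "p = proj Vb Y - proj U Y"
  have pU: "inner p u = 0" if "u \<in> U" for u
  proof -
    have "inner p u = inner (Y - proj U Y) u - inner (Y - proj Vb Y) u"
      by (simp add: p_def inner_diff_left)
    then show ?thesis using proj_props(2)[OF sU that] proj_props(2)[OF sV] UV that by auto
  qed
  have pV: "p \<in> Vb" unfolding p_def using proj_props(1)[OF sV] proj_props(1)[OF sU] UV subspace_diff[OF sV] by blast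
  have XW: "b - proj U b \<in> W" if "b \<in> span X" for b
    using that
  proof (induction rule: span_induct)
    case base
    show ?case unfolding subspace_def
    proof (intro conjI allI impI ballI)
      show "0 \<in> {b. b - proj U b \<in> W}" using proj_in_self[OF sU subspace_0[OF sU]] subspace_0[OF sW] by simp
    next
      fix b1 b2 assume "b1 \<in> {b. b - proj U b \<in> W}" "b2 \<in> {b. b - proj U b \<in> W}"
      then have "(b1 - proj U b1) + (b2 - proj U b2) \<in> W" using subspace_add[OF sW] by blast
      then show "b1 + b2 \<in> {b. b - proj U b \<in> W}" by (simp add: proj_add[OF sU] algebra_simps)
    next
      fix c :: real and b1 assume "b1 \<in> {b. b - proj U b \<in> W}"
      then have "c *\<^sub>R (b1 - proj U b1) \<in> W" using subspace_scale[OF sW] by blast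
      then show "c *\<^sub>R b1 \<in> {b. b - proj U b \<in> W}" by (simp add: proj_scale[OF sU] scaleR_diff_right)
    qed
  next
    case (step b)
    then obtain a where "a < d" "b = x a" using X_def by blast
    then show ?case unfolding W_def z_def by (auto intro: span_base)
  qed
  have pW: "p \<in> W"
  proof -
    have "p \<in> span (U \<union> X)" using pV Vb_def by simp
    then obtain u b where ub: "p = u + b" "u \<in> span U" "b \<in> span X" unfolding span_Un by blast
    have uU: "u \<in> U" using ub(2) span_minimal[OF order_refl sU] by blast
    define u' where "u' = u + proj U b"
    define w' where "w' = b - proj U b"
    have u'U: "u' \<in> U" unfolding u'_def using uU proj_props(1)[OF sU] subspace_add[OF sU] by blast
    have w'W: "w' \<in> W" unfolding w'_def by (rule XW[OF ub(3)])
    have pe: "p = u' + w'" using ub by (simp add: u'_def w'_def)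
    have "inner u' u' = inner p u' - inner w' u'" using pe by (simp add: inner_add_left)
    also have "\<dots> = 0" using pU[OF u'U] WU[OF w'W u'U] by simp
    finally have "u' = 0" by simp
    then show ?thesis using pe w'W by simp
  qed
  obtain \<beta> where beta: "p = (\<Sum>c<d. \<beta> c *\<^sub>R z c)" using span_repr[of p z d] pW W_def by blast
  have qa: "inner (x a) (Y - proj U Y) = (\<Sum>c<d. inner (z a) (z c) * \<beta> c)" if "a < d" for a
  proof -
    have "inner (x a) (Y - proj U Y) = inner (z a) (Y - proj U Y) + inner (proj U (x a)) (Y - proj U Y)"
      by (simp add: z_def inner_diff_left)
    also have "inner (proj U (x a)) (Y - proj U Y) = 0"
      using proj_props(2)[OF sU proj_props(1)[OF sU]] by (simp add: inner_commute)
    also have "inner (z a) (Y - proj U Y) = inner (z a) p + inner (z a) (Y - proj Vb Y)"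
      by (simp add: p_def inner_diff_right)
    also have "inner (z a) (Y - proj Vb Y) = 0"
      using proj_props(2)[OF sV zV[OF that]] by (simp add: inner_commute)
    also have "inner (z a) p = (\<Sum>c<d. inner (z a) (z c) * \<beta> c)"
      by (simp add: beta inner_sum_right mult.commute)
    finally show ?thesis by simp
  qed
  have "SSadj s lev S F Y = (\<Sum>a<d. \<Sum>b<d. Qvec s lev S F Y a * G a b * Qvec s lev S F Y b)"
    by (simp add: SSadj_def G_def d_def Let_def)
  also have "\<dots> = (\<Sum>a<d. \<Sum>b<d. (\<Sum>c<d. inner (z a) (z c) * \<beta> c) * G a b * (\<Sum>e<d. inner (z b) (z e) * \<beta> e))"
    using qa by (simp add: Q)
  also have "\<dots> = (\<Sum>c<d. \<Sum>e<d. \<beta> c * inner (z c) (z e) * \<beta> e)"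
    by (rule quad_ginv[OF _ gi]) (simp add: inner_commute)
  also have "\<dots> = inner p p"
    by (simp add: beta inner_sum_left inner_sum_right sum_distrib_left sum_distrib_right mult_ac inner_commute)
  also have "\<dots> = (norm (proj Vb Y - Pfac s lev S Y))\<^sup>2"
    by (simp add: p_def Pfac_def U_def power2_norm_eq_inner)
  finally show ?thesis by (simp add: Vb_def U_def X_def x_def d_def)
qed



definition rep :: "(nat \<Rightarrow> nat \<Rightarrow> 'r::finite \<Rightarrow> nat) \<Rightarrow> nat \<Rightarrow> nat \<Rightarrow> nat \<Rightarrow> real" where
  "rep lev i j t = real (card {u. lev i j u = t})"

definition cent :: "(nat \<Rightarrow> nat \<Rightarrow> nat) \<Rightarrow> (nat \<Rightarrow> nat \<Rightarrow> 'r::finite \<Rightarrow> nat) \<Rightarrow> (nat \<times> nat) set \<Rightarrow> (real^'r) set" where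
  "cent s lev R = {xcol lev i j t - (rep lev i j t / real CARD('r)) *\<^sub>R ones | i j t. (i, j) \<in> R \<and> t < s i j}"

definition Wc :: "(nat \<Rightarrow> nat \<Rightarrow> nat) \<Rightarrow> (nat \<Rightarrow> nat \<Rightarrow> 'r::finite \<Rightarrow> nat) \<Rightarrow> (nat \<times> nat) set \<Rightarrow> (real^'r) set" where
  "Wc s lev R = span (cent s lev R)"

lemma sum_indicator_card:
  fixes P :: "'r::finite \<Rightarrow> bool"
  shows "(\<Sum>u\<in>UNIV. if P u then (1::real) else 0) = real (card {u. P u})"
proof -
  have "(\<Sum>u\<in>UNIV. if P u then (1::real) else 0) = (\<Sum>u\<in>UNIV. of_bool (P u))"
    by (rule sum.cong) auto
  then show ?thesis by simp
qed

lemma inner_xcol_xcol: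
  "inner (xcol lev i j a) (xcol lev i' j' b) = real (card {u. lev i j u = a \<and> lev i' j' u = b})"
proof -
  have "inner (xcol lev i j a) (xcol lev i' j' b) = (\<Sum>u\<in>UNIV. if lev i j u = a \<and> lev i' j' u = b then (1::real) else 0)"
    unfolding inner_vec_def xcol_def by (intro sum.cong) auto
  then show ?thesis by (simp add: sum_indicator_card)
qed

lemma inner_xcol_ones:
  "inner (xcol lev i j a) (ones :: real^'r::finite) = rep lev i j a"
proof -
  have "inner (xcol lev i j a) (ones :: real^'r) = (\<Sum>u\<in>UNIV. if lev i j u = a then (1::real) else 0)"
    unfolding inner_vec_def xcol_def ones_def by (intro sum.cong) auto
  then show ?thesis by (simp add: sum_indicator_card rep_def)
qed

lemma inner_ones_ones: "inner (ones :: real^'r::finite) ones = real CARD('r)"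
  by (simp add: inner_vec_def ones_def)

lemma cent_orth_ones:
  fixes lev :: "nat \<Rightarrow> nat \<Rightarrow> 'r::finite \<Rightarrow> nat"
  assumes "w \<in> cent s lev R"
  shows "inner ones w = 0"
proof -
  obtain i j t where w: "w = xcol lev i j t - (rep lev i j t / real CARD('r)) *\<^sub>R ones"
    using assms unfolding cent_def by blast
  have n: "real CARD('r) \<noteq> 0" by simp
  have "inner ones w = rep lev i j t - (rep lev i j t / real CARD('r)) * real CARD('r)"
    using inner_xcol_ones[of lev i j t] by (simp add: w inner_diff_right inner_commute[of ones "xcol lev i j t"] inner_ones_ones)
  then show ?thesis using n by simp
qed

lemma cent_orth_xcol:
  fixes lev :: "nat \<Rightarrow> nat \<Rightarrow> 'r::finite \<Rightarrow> nat"
  assumes orth: "inter_class_orthogonal k m lev"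
    and A: "(i, j) \<in> facs k m" and R: "R \<subseteq> facs k m" and sep: "\<forall>B\<in>R. fst B \<noteq> i"
    and w: "w \<in> cent s lev R"
  shows "inner (xcol lev i j a) w = 0"
proof -
  obtain i' j' t where w: "w = xcol lev i' j' t - (rep lev i' j' t / real CARD('r)) *\<^sub>R ones"
    and B: "(i', j') \<in> R"
    using w unfolding cent_def by blast
  have B': "(i', j') \<in> facs k m" using B R by blast
  have ii: "i \<noteq> i'" using sep B by force
  have o: "orth_factors lev (i, j) (i', j')"
    using orth A B' ii unfolding inter_class_orthogonal_def by force
  have card: "real (card {u. lev i j u = a \<and> lev i' j' u = t}) = rep lev i j a * rep lev i' j' t / real CARD('r)"
    using o unfolding orth_factors_def rep_def by simp
  have "inner (xcol lev i j a) w = real (card {u. lev i j u = a \<and> lev i' j' u = t})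
        - (rep lev i' j' t / real CARD('r)) * rep lev i j a"
    by (simp add: w inner_diff_right inner_xcol_xcol inner_xcol_ones)
  then show ?thesis using card by simp
qed

lemma gen_orth:
  fixes lev :: "nat \<Rightarrow> nat \<Rightarrow> 'r::finite \<Rightarrow> nat"
  assumes orth: "inter_class_orthogonal k m lev"
    and T: "T \<subseteq> facs k m" and R: "R \<subseteq> facs k m" and sep: "\<forall>A\<in>T. \<forall>B\<in>R. fst A \<noteq> fst B"
    and v: "v \<in> colsp s lev T" and w: "w \<in> Wc s lev R"
  shows "inner v w = 0"
proof -
  have g: "inner v' w' = 0" if v': "v' \<in> insert ones (\<Union>(i, j)\<in>T. {xcol lev i j t | t. t < s i j})"
    and w': "w' \<in> cent s lev R" for v' w'
  proof (cases "v' = ones")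
    case True then show ?thesis using cent_orth_ones[OF w'] by simp
  next
    case False
    then obtain i j t where ij: "(i, j) \<in> T" "v' = xcol lev i j t" using v' by auto
    have sep': "\<forall>B\<in>R. fst B \<noteq> i" using sep ij(1) by force
    show ?thesis using cent_orth_xcol[OF orth _ R sep' w'] ij T by blast
  qed
  have "orthogonal w' v" if w': "w' \<in> cent s lev R" for w'
    by (rule orthogonal_to_span[OF v[unfolded colsp_def]])
       (use g w' in \<open>simp add: orthogonal_def inner_commute\<close>)
  then have "orthogonal v w"
    by (intro orthogonal_to_span[OF w[unfolded Wc_def]]) (simp add: orthogonal_commute)
  then show ?thesis by (simp add: orthogonal_def)
qed

lemma colsp_split:
  fixes lev :: "nat \<Rightarrow> nat \<Rightarrow> 'r::finite \<Rightarrow> nat"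
  shows "colsp s lev (T \<union> R) = {u + w | u w. u \<in> colsp s lev T \<and> w \<in> Wc s lev R}"
proof -
  let ?cT = "\<Union>(i, j)\<in>T. {xcol lev i j t | t. t < s i j}"
  let ?cR = "\<Union>(i, j)\<in>R. {xcol lev i j t | t. t < s i j}"
  have cols: "(\<Union>(i, j)\<in>T \<union> R. {xcol lev i j t | t. t < s i j}) = ?cT \<union> ?cR" by blast
  have "span (insert ones (?cT \<union> ?cR)) = span (insert ones ?cT \<union> cent s lev R)"
  proof (subst span_eq, intro conjI subsetI)
    fix v assume "v \<in> insert ones (?cT \<union> ?cR)"
    then consider "v \<in> insert ones ?cT" | "v \<in> ?cR" by blast
    then show "v \<in> span (insert ones ?cT \<union> cent s lev R)"
    proof cases
      case 1 then show ?thesis by (intro span_base) blast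
    next
      case 2
      then obtain i j t where ij: "(i, j) \<in> R" "t < s i j" "v = xcol lev i j t" by blast
      let ?c = "rep lev i j t / real CARD('r)"
      have "xcol lev i j t - ?c *\<^sub>R ones \<in> cent s lev R" using ij unfolding cent_def by blast
      then have a: "xcol lev i j t - ?c *\<^sub>R ones \<in> span (insert ones ?cT \<union> cent s lev R)"
        by (intro span_base) blast
      have b: "?c *\<^sub>R ones \<in> span (insert ones ?cT \<union> cent s lev R)"
        by (intro span_mul span_base) blast
      have "v = (xcol lev i j t - ?c *\<^sub>R ones) + ?c *\<^sub>R ones" using ij by simp
      then show ?thesis using span_add[OF a b] by simp
    qed
  next
    fix v assume "v \<in> insert ones ?cT \<union> cent s lev R"
    then consider "v \<in> insert ones ?cT" | "v \<in> cent s lev R" by blast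
    then show "v \<in> span (insert ones (?cT \<union> ?cR))"
    proof cases
      case 1 then show ?thesis by (intro span_base) blast
    next
      case 2
      then obtain i j t where ij: "(i, j) \<in> R" "t < s i j"
        "v = xcol lev i j t - (rep lev i j t / real CARD('r)) *\<^sub>R ones" unfolding cent_def by blast
      have a: "xcol lev i j t \<in> span (insert ones (?cT \<union> ?cR))" using ij by (intro span_base) blast
      have b: "(rep lev i j t / real CARD('r)) *\<^sub>R ones \<in> span (insert ones (?cT \<union> ?cR))"
        by (intro span_mul span_base) blast
      show ?thesis using span_diff[OF a b] ij(3) by simp
    qed
  qed
  then show ?thesis unfolding colsp_def Wc_def cols span_Un by simp
qed

lemma Pfac_split:
  fixes lev :: "nat \<Rightarrow> nat \<Rightarrow> 'r::finite \<Rightarrow> nat"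
  assumes orth: "inter_class_orthogonal k m lev"
    and T: "T \<subseteq> facs k m" and R: "R \<subseteq> facs k m" and sep: "\<forall>A\<in>T. \<forall>B\<in>R. fst A \<noteq> fst B"
  shows "Pfac s lev (T \<union> R) y = Pfac s lev T y + proj (Wc s lev R) y"
  unfolding Pfac_def
  by (rule proj_osum[OF _ _ colsp_split gen_orth[OF orth T R sep]])
     (auto simp: colsp_def Wc_def intro: subspace_span)

lemma xcol_orth_Wc:
  fixes lev :: "nat \<Rightarrow> nat \<Rightarrow> 'r::finite \<Rightarrow> nat"
  assumes orth: "inter_class_orthogonal k m lev"
    and A: "(i, j) \<in> facs k m" and R: "R \<subseteq> facs k m" and sep: "\<forall>B\<in>R. fst B \<noteq> i"
    and w: "w \<in> Wc s lev R"
  shows "inner (xcol lev i j a) w = 0"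
proof -
  have "orthogonal (xcol lev i j a) w"
    by (rule orthogonal_to_span[OF w[unfolded Wc_def]])
       (use cent_orth_xcol[OF orth A R sep] in \<open>simp add: orthogonal_def\<close>)
  then show ?thesis by (simp add: orthogonal_def)
qed



lemma colsp_mono: "S \<subseteq> S' \<Longrightarrow> colsp s lev S \<subseteq> colsp s lev S'"
  unfolding colsp_def by (intro span_mono) blast

lemma subspace_colsp: "subspace (colsp s lev S)"
  unfolding colsp_def by (rule subspace_span)

lemma CQ_eq:
  fixes lev :: "nat \<Rightarrow> nat \<Rightarrow> 'r::finite \<Rightarrow> nat"
  assumes orth: "inter_class_orthogonal k m lev"
    and ij: "(i, j) \<in> facs k m" and T: "T \<subseteq> facs k m" and R: "R \<subseteq> facs k m"
    and sT: "\<forall>A\<in>T. fst A = i" and sR: "\<forall>B\<in>R. fst B \<noteq> i"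
  shows "Cmat s lev (T \<union> R) (i, j) = Cmat s lev T (i, j)"
    and "Qvec s lev (T \<union> R) (i, j) Y = Qvec s lev T (i, j) Y"
    and "SSadj s lev (T \<union> R) (i, j) Y = SSadj s lev T (i, j) Y"
proof -
  have sep: "\<forall>A\<in>T. \<forall>B\<in>R. fst A \<noteq> fst B" using sT sR by auto
  have sW: "subspace (Wc s lev R)" unfolding Wc_def by (rule subspace_span)
  have xo: "inner (xcol lev i j a) w = 0" if "w \<in> Wc s lev R" for a w
    by (rule xcol_orth_Wc[OF orth ij R sR that])
  have P: "Pfac s lev (T \<union> R) y = Pfac s lev T y + proj (Wc s lev R) y" for y
    by (rule Pfac_split[OF orth T R sep])
  have p0: "proj (Wc s lev R) (xcol lev i j b) = 0" for b
    by (rule proj_orth_zero[OF sW]) (use xo in blast)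
  show C: "Cmat s lev (T \<union> R) (i, j) = Cmat s lev T (i, j)"
    by (intro ext) (simp add: Cmat_def resid_def P p0)
  have "Qvec s lev (T \<union> R) (i, j) Y a = Qvec s lev T (i, j) Y a" for a
  proof -
    have "Qvec s lev (T \<union> R) (i, j) Y a = Qvec s lev T (i, j) Y a - inner (xcol lev i j a) (proj (Wc s lev R) Y)"
      by (simp add: Qvec_def resid_def P inner_diff_right inner_add_right)
    then show ?thesis using xo[OF proj_props(1)[OF sW]] by simp
  qed
  then show Q: "Qvec s lev (T \<union> R) (i, j) Y = Qvec s lev T (i, j) Y" by (rule ext)
  show "SSadj s lev (T \<union> R) (i, j) Y = SSadj s lev T (i, j) Y"
    unfolding SSadj_def C Q ..
qed

lemma colsp_insert:
  fixes lev :: "nat \<Rightarrow> nat \<Rightarrow> 'r::finite \<Rightarrow> nat"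
  shows "span (colsp s lev S \<union> xcol lev c j ` {..<s c j}) = colsp s lev (S \<union> {(c, j)})"
proof -
  let ?A = "insert ones (\<Union>(i, j)\<in>S. {xcol lev i j t | t. t < s i j})"
  let ?X = "xcol lev c j ` {..<s c j}"
  have e: "insert ones (\<Union>(i, j)\<in>S \<union> {(c, j)}. {xcol lev i j t | t. t < s i j}) = ?A \<union> ?X" by auto
  have "span (span ?A \<union> ?X) = span (?A \<union> ?X)"
  proof (subst span_eq, intro conjI)
    show "span ?A \<union> ?X \<subseteq> span (?A \<union> ?X)"
      using span_mono[of ?A "?A \<union> ?X"] span_superset[of "?A \<union> ?X"] by blast
    show "?A \<union> ?X \<subseteq> span (span ?A \<union> ?X)"
      using span_superset[of ?A] span_superset[of "span ?A \<union> ?X"] by blast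
  qed
  then show ?thesis unfolding colsp_def e .
qed

lemma SS_step:
  fixes lev :: "nat \<Rightarrow> nat \<Rightarrow> 'r::finite \<Rightarrow> nat"
  shows "SSadj s lev S (c, j) Y = (norm (Pfac s lev (S \<union> {(c, j)}) Y - Pfac s lev S Y))\<^sup>2"
  using SSadj_eq[of s lev S "(c, j)" Y] colsp_insert[of s lev S c j] by (simp add: Pfac_def)

lemma Pfac_empty:
  fixes Y :: "real^'r::finite"
  shows "Pfac s lev {} Y = ((\<Sum>u\<in>UNIV. Y $ u) / real CARD('r)) *\<^sub>R ones"
proof -
  have cs: "colsp s lev {} = span {ones :: real^'r}" unfolding colsp_def by simp
  let ?c = "(\<Sum>u\<in>UNIV. Y $ u) / real CARD('r)"
  have "proj (span {ones}) Y = ?c *\<^sub>R ones"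
  proof (rule proj_char[OF subspace_span])
    show "?c *\<^sub>R ones \<in> span {ones}" by (intro span_mul span_base) simp
    show "\<forall>v\<in>span {ones}. inner (Y - ?c *\<^sub>R ones) v = 0"
    proof
      fix v :: "real^'r" assume "v \<in> span {ones}"
      then obtain t where v: "v = t *\<^sub>R ones" by (auto simp: span_singleton)
      have "inner Y ones = (\<Sum>u\<in>UNIV. Y $ u)" by (simp add: inner_vec_def ones_def)
      then have "inner (Y - ?c *\<^sub>R ones) ones = 0" by (simp add: inner_diff_left inner_ones_ones)
      then show "inner (Y - ?c *\<^sub>R ones) v = 0" by (simp add: v)
    qed
  qed
  then show ?thesis by (simp add: Pfac_def cs)
qed

lemma SS_tot_eq:
  fixes Y :: "real^'r::finite"
  shows "SS_tot Y = (norm (Y - Pfac s lev {} Y))\<^sup>2"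
proof -
  define c where "c = (\<Sum>u\<in>UNIV. Y $ u) / real CARD('r)"
  define n where "n = real CARD('r)"
  have n: "n \<noteq> 0" by (simp add: n_def)
  have "(norm (Y - Pfac s lev {} Y))\<^sup>2 = (\<Sum>u\<in>UNIV. (Y $ u - c)\<^sup>2)"
  proof -
    have "(norm (Y - Pfac s lev {} Y))\<^sup>2 = inner (Y - c *\<^sub>R ones) (Y - c *\<^sub>R ones)"
      unfolding power2_norm_eq_inner by (simp add: Pfac_empty c_def)
    also have "\<dots> = (\<Sum>u\<in>UNIV. (Y $ u - c)\<^sup>2)"
      unfolding inner_vec_def by (simp add: ones_def power2_eq_square)
    finally show ?thesis .
  qed
  also have "\<dots> = (\<Sum>u\<in>UNIV. (Y $ u)\<^sup>2) - 2 * c * (\<Sum>u\<in>UNIV. Y $ u) + n * c\<^sup>2"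
    by (simp add: power2_diff sum.distrib sum_subtractf sum_distrib_left n_def mult_ac)
  also have "\<dots> = SS_tot Y"
    unfolding SS_tot_def c_def n_def[symmetric] using n by (simp add: field_simps power2_eq_square)
  finally show ?thesis ..
qed



lemma class_sum:
  fixes lev :: "nat \<Rightarrow> nat \<Rightarrow> 'r::finite \<Rightarrow> nat"
  shows "(\<Sum>j'=1..m c. SSadj s lev (class_after m c j') (c, j') Y)
       = (norm (Pfac s lev (class_after m c 0) Y - Pfac s lev {} Y))\<^sup>2"
proof -
  define h where "h j = (norm (Pfac s lev (class_after m c j) Y - Pfac s lev {} Y))\<^sup>2" for j
  have st: "SSadj s lev (class_after m c (Suc n)) (c, Suc n) Y = h n - h (Suc n)" if "n < m c" for n
  proof -
    have e: "class_after m c (Suc n) \<union> {(c, Suc n)} = class_after m c n"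
      using that by (auto simp: class_after_def)
    have "h n = (norm (Pfac s lev (class_after m c n) Y - Pfac s lev (class_after m c (Suc n)) Y))\<^sup>2 + h (Suc n)"
      unfolding h_def Pfac_def
      by (rule proj_chain[OF subspace_colsp subspace_colsp subspace_colsp colsp_mono colsp_mono])
         (auto simp: class_after_def)
    then show ?thesis using SS_step[of s lev "class_after m c (Suc n)" c "Suc n" Y] e by simp
  qed
  have "(\<Sum>j'=1..m c. SSadj s lev (class_after m c j') (c, j') Y)
      = (\<Sum>n<m c. SSadj s lev (class_after m c (Suc n)) (c, Suc n) Y)"
    using sum.atLeast1_atMost_eq[of "\<lambda>j'. SSadj s lev (class_after m c j') (c, j') Y" "m c"] by simp
  also have "\<dots> = (\<Sum>n<m c. h n - h (Suc n))" using st by (intro sum.cong) auto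
  also have "\<dots> = h 0 - h (m c)" by (rule sum_lessThan_telescope')
  also have "h (m c) = 0"
  proof -
    have "class_after m c (m c) = {}" by (auto simp: class_after_def)
    then show ?thesis by (simp add: h_def)
  qed
  finally show ?thesis by (simp add: h_def)
qed

lemma total_sum:
  fixes lev :: "nat \<Rightarrow> nat \<Rightarrow> 'r::finite \<Rightarrow> nat"
  assumes orth: "inter_class_orthogonal k m lev"
  shows "(norm (Pfac s lev (facs k m) Y - Pfac s lev {} Y))\<^sup>2
       = (\<Sum>c=1..k. (norm (Pfac s lev (class_after m c 0) Y - Pfac s lev {} Y))\<^sup>2)"
proof -
  define Sc where "Sc c = {B \<in> facs k m. fst B \<le> c}" for c
  define g where "g c = (norm (Pfac s lev (Sc c) Y - Pfac s lev {} Y))\<^sup>2" for c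
  define f where "f c = (norm (Pfac s lev (class_after m c 0) Y - Pfac s lev {} Y))\<^sup>2" for c
  have st: "g (Suc n) - g n = f (Suc n)" if "n < k" for n
  proof -
    define Cl where "Cl = class_after m (Suc n) 0"
    have e: "Sc (Suc n) = Sc n \<union> Cl"
      using that by (auto simp: Sc_def Cl_def class_after_def facs_def le_Suc_eq)
    have Cl: "Cl \<subseteq> facs k m" using that by (auto simp: Cl_def class_after_def facs_def)
    have T: "Sc n \<subseteq> facs k m" by (auto simp: Sc_def)
    have sep: "\<forall>A\<in>Sc n. \<forall>B\<in>Cl. fst A \<noteq> fst B" by (auto simp: Sc_def Cl_def class_after_def)
    have P1: "Pfac s lev (Sc (Suc n)) Y = Pfac s lev (Sc n) Y + proj (Wc s lev Cl) Y"
      unfolding e by (rule Pfac_split[OF orth T Cl sep])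
    have P2: "Pfac s lev ({} \<union> Cl) Y = Pfac s lev {} Y + proj (Wc s lev Cl) Y"
      by (rule Pfac_split[OF orth _ Cl]) auto
    have "g (Suc n) = (norm (Pfac s lev (Sc (Suc n)) Y - Pfac s lev (Sc n) Y))\<^sup>2 + g n"
      unfolding g_def Pfac_def
      by (rule proj_chain[OF subspace_colsp subspace_colsp subspace_colsp colsp_mono colsp_mono])
         (auto simp: Sc_def)
    moreover have "Pfac s lev (Sc (Suc n)) Y - Pfac s lev (Sc n) Y = Pfac s lev Cl Y - Pfac s lev {} Y"
      using P1 P2 by simp
    ultimately show ?thesis by (simp add: f_def Cl_def)
  qed
  have "(\<Sum>c=1..k. f c) = (\<Sum>n<k. f (Suc n))"
    using sum.atLeast1_atMost_eq[of f k] by simp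
  also have "\<dots> = (\<Sum>n<k. g (Suc n) - g n)" using st by (intro sum.cong) auto
  also have "\<dots> = g k - g 0" by (rule sum_lessThan_telescope)
  finally have fin: "(\<Sum>c=1..k. f c) = g k - g 0" .
  have "Sc 0 = {}" by (auto simp: Sc_def facs_def)
  moreover have "Sc k = facs k m" by (auto simp: Sc_def facs_def)
  ultimately show ?thesis using fin by (simp add: g_def f_def)
qed

lemma partc:
  fixes lev :: "nat \<Rightarrow> nat \<Rightarrow> 'r::finite \<Rightarrow> nat"
  assumes orth: "inter_class_orthogonal k m lev"
  shows "SS_E k m s lev Y = SS_tot Y - (\<Sum>i'=1..k. \<Sum>j'=1..m i'. SSadj s lev (class_after m i' j') (i', j') Y)"
proof -
  have "(norm (proj UNIV Y - Pfac s lev {} Y))\<^sup>2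
      = (norm (proj UNIV Y - Pfac s lev (facs k m) Y))\<^sup>2 + (norm (Pfac s lev (facs k m) Y - Pfac s lev {} Y))\<^sup>2"
    unfolding Pfac_def
    by (rule proj_chain[OF subspace_colsp subspace_colsp subspace_UNIV colsp_mono]) auto
  then have "SS_tot Y = SS_E k m s lev Y + (\<Sum>c=1..k. (norm (Pfac s lev (class_after m c 0) Y - Pfac s lev {} Y))\<^sup>2)"
    using SS_tot_eq[of Y s lev] total_sum[OF orth, of s Y]
    by (simp add: proj_UNIV SS_E_def resid_def)
  also have "(\<Sum>c=1..k. (norm (Pfac s lev (class_after m c 0) Y - Pfac s lev {} Y))\<^sup>2)
      = (\<Sum>i'=1..k. \<Sum>j'=1..m i'. SSadj s lev (class_after m i' j') (i', j') Y)"
    by (rule sum.cong[OF refl]) (rule class_sum[symmetric])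
  finally show ?thesis by simp
qed

theorem theorem4p6:
  fixes k :: nat and m :: "nat \<Rightarrow> nat" and s :: "nat \<Rightarrow> nat \<Rightarrow> nat"
    and lev :: "nat \<Rightarrow> nat \<Rightarrow> 'r::finite \<Rightarrow> nat"
    and Y :: "real^'r" and i j :: nat
  assumes plan: "valid_plan k m s lev"
    and orth: "inter_class_orthogonal k m lev"
    and ij: "(i, j) \<in> facs k m"
  shows "(\<forall>a < s i j. \<forall>b < s i j.
            Cmat s lev (all_but k m i j) (i, j) a b = Cmat s lev (class_but m i j) (i, j) a b)
       \<and> (\<forall>a < s i j. Qvec s lev (all_but k m i j) (i, j) Y a = Qvec s lev (class_but m i j) (i, j) Y a)
       \<and> SSadj s lev (all_but k m i j) (i, j) Y = SSadj s lev (class_but m i j) (i, j) Y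
       \<and> SSadj s lev (all_after k m i j) (i, j) Y = SSadj s lev (class_after m i j) (i, j) Y
       \<and> SS_E k m s lev Y = SS_tot Y - (\<Sum>i'=1..k. \<Sum>j'=1..m i'. SSadj s lev (class_after m i' j') (i', j') Y)"
proof -
  have i1: "1 \<le> i" "i \<le> k" "1 \<le> j" "j \<le> m i" using ij by (auto simp: facs_def)
  define T1 where "T1 = class_but m i j"
  define R1 where "R1 = {B \<in> facs k m. fst B \<noteq> i}"
  have e1: "all_but k m i j = T1 \<union> R1"
    using i1 by (auto simp: all_but_def T1_def R1_def class_but_def facs_def)
  have T1: "T1 \<subseteq> facs k m" using i1 by (auto simp: T1_def class_but_def facs_def)
  have R1: "R1 \<subseteq> facs k m" by (auto simp: R1_def)
  have sT1: "\<forall>A\<in>T1. fst A = i" by (auto simp: T1_def class_but_def)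
  have sR1: "\<forall>B\<in>R1. fst B \<noteq> i" by (auto simp: R1_def)
  note A = CQ_eq[OF orth ij T1 R1 sT1 sR1]
  define T2 where "T2 = class_after m i j"
  define R2 where "R2 = {B \<in> facs k m. i < fst B}"
  have e2: "all_after k m i j = T2 \<union> R2"
    using i1 by (auto simp: all_after_def T2_def R2_def class_after_def facs_def)
  have T2: "T2 \<subseteq> facs k m" using i1 by (auto simp: T2_def class_after_def facs_def)
  have R2: "R2 \<subseteq> facs k m" by (auto simp: R2_def)
  have sT2: "\<forall>A\<in>T2. fst A = i" by (auto simp: T2_def class_after_def)
  have sR2: "\<forall>B\<in>R2. fst B \<noteq> i" by (auto simp: R2_def)
  note B = CQ_eq[OF orth ij T2 R2 sT2 sR2]
  show ?thesis
    using A B partc[OF orth, of s Y] unfolding e1 e2 T1_def T2_def by simp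
qed

end
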